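(* In the setting of the context (analytic vector field $f$ with Jacobian $A$ having distinct eigenvalues, truncation order $N_{\max}\ge 1$ with the non-resonance condition, fixed index sets $S_N$, fixed perturbation amplitude $\alpha\neq0$), let $(\phi_j,\psi_j)_{j=1}^n$ and $(\phi'_j,\psi'_j)_{j=1}^n$ be two eigenvector choices with $\theta$-factors $\theta_j$ and $\theta'_j$. If $\theta_j=\theta'_j$ for all $j\in\{1,\dots,n\}$, then for every state index $k\in\{1,\dots,n\}$, every combination order $M$ with $1\le M\le N_{\max}$ and every tuple of mode indices $(r_1,\dots,r_M)\in\{1,\dots,n\}^M$, the nonlinear participation factors computed from the two choices coincide: $p_{k,r_1\cdots r_M}=p'_{k,r_1\cdots r_M}$. That is, the nonlinear participation factors of all orders, for linear modes ($M=1$) and combination modes ($M\ge2$), are uniquely determined whenever all $\theta$-factors are uniquely determined.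
   Context: Let $f:\mathbb{R}^n\to\mathbb{R}^n$ be analytic with $f(0)=0$, and write its Taylor expansion at $0$ as $f_j(x)=\sum_{i}a_{ji}x_i+\sum_{N\ge2}\sum_{\alpha_1,\dots,\alpha_N=1}^n a_{j,\alpha_1\cdots\alpha_N}x_{\alpha_1}\cdots x_{\alpha_N}$. Let $A=(a_{ji})$ be the Jacobian at $0$, assumed to have $n$ distinct eigenvalues $\lambda_1,\dots,\lambda_n\in\mathbb{C}$. For each $i$ fix a right eigenvector $\hat\phi_i$ (column) and a left eigenvector $\hat\psi_i$ (row) of $A$ for $\lambda_i$, each of unit 2-norm, and set $c_i:=\hat\psi_i\hat\phi_i\neq0$ (non-conjugated product). An eigenvector choice is a tuple $(\phi_i,\psi_i)_{i=1}^n$ with $\phi_i=\sigma_i\hat\phi_i$, $\psi_i=\xi_i\hat\psi_i$, $\sigma_i,\xi_i\in\mathbb{C}\setminus\{0\}$; its $\theta$-factors are $\theta_i:=\psi_i\phi_i=\sigma_i\xi_ic_i$. Write $\phi_{ki}$, $\psi_{ik}$ for the $k$-th entries of $\phi_i$, $\psi_i$. Fix a truncation order $N_{\max}\ge1$ and assume non-resonance: $\lambda_{r_1}+\dots+\lambda_{r_N}-\lambda_i\neq0$ for all $2\le N\le N_{\max}$, all $i$ and all $(r_1,\dots,r_N)$. Given an eigenvector choice, define for $2\le N\le N_{\max}$ the normal-form coefficients $h^i_{r_1\cdots r_N}:=\dfrac{\sum_{j=1}^n\sum_{\alpha_1,\dots,\alpha_N=1}^n\psi_{ij}\,a_{j,\alpha_1\cdots\alpha_N}\,\phi_{\alpha_1r_1}\cdots\phi_{\alpha_Nr_N}}{\lambda_{r_1}+\dots+\lambda_{r_N}-\lambda_i}$,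 and for $N=1$ set $h^i_r:=1$ if $r=i$ and $0$ otherwise. For each $2\le N\le N_{\max}$ fix an index set $S_N\subseteq\{1,\dots,n\}^N$ (independent of the eigenvector choice; e.g. in second order the paper uses $\{(p,q):p\le q\}$). Fix a perturbation amplitude $\alpha\in\mathbb{R}\setminus\{0\}$ (initial state $\alpha e_k$). Define $\mu_{lk}:=\alpha\psi_{lk}-\sum_{N=2}^{N_{\max}}\alpha^N\sum_{(r_1,\dots,r_N)\in S_N}h^l_{r_1\cdots r_N}\psi_{r_1k}\cdots\psi_{r_Nk}$, and the nonlinear participation factor of state $k$ in the (linear if $M=1$, combination if $M\ge2$) mode $(r_1,\dots,r_M)$, $1\le M\le N_{\max}$, as $p_{k,r_1\cdots r_M}:=\sum_{i=1}^n\phi_{ki}\,h^i_{r_1\cdots r_M}\,\mu_{r_1k}\cdots\mu_{r_Mk}$ (for $M=1$ this is $p_{kr}=\phi_{kr}\mu_{rk}$). *)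

theory Defs
  imports "HOL-Analysis.Analysis"
begin

text \<open>State indices and mode indices range over a finite type 'n (standing for {1..n}).
  Higher-order Taylor coefficients a_{j,alpha_1...alpha_N} are given as a function
  a j [alpha_1,...,alpha_N]; tuples (r_1,...,r_N) are lists of length N.\<close>

definition tuples :: "nat \<Rightarrow> 'n::finite list set" where
  "tuples N = {xs. set xs \<subseteq> UNIV \<and> length xs = N}"

definition cplx_mat :: "real^'n^'n \<Rightarrow> complex^'n^'n" where
  "cplx_mat A = (\<chi> j k. complex_of_real (A$j$k))"

text \<open>Non-conjugated product of a row vector psi and a column vector phi.\<close>
definition bilin :: "complex^'n::finite \<Rightarrow> complex^'n \<Rightarrow> complex" where
  "bilin psi phi = (\<Sum>k\<in>UNIV. psi$k * phi$k)"

definition nf_coeff ::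
  "('n::finite \<Rightarrow> 'n list \<Rightarrow> real) \<Rightarrow> ('n \<Rightarrow> complex) \<Rightarrow>
   ('n \<Rightarrow> complex^'n) \<Rightarrow> ('n \<Rightarrow> complex^'n) \<Rightarrow> 'n \<Rightarrow> 'n list \<Rightarrow> complex" where
  "nf_coeff a lam phi psi i rs =
     (if length rs = 1 then (if rs = [i] then 1 else 0)
      else (\<Sum>j\<in>UNIV. \<Sum>al\<in>tuples (length rs).
              (psi i)$j * complex_of_real (a j al) *
              (\<Prod>m<length rs. (phi (rs!m))$(al!m)))
           / (sum_list (map lam rs) - lam i))"

definition mu_coeff ::
  "('n::finite \<Rightarrow> 'n list \<Rightarrow> real) \<Rightarrow> ('n \<Rightarrow> complex) \<Rightarrow> nat \<Rightarrow> (nat \<Rightarrow> 'n list set) \<Rightarrow> real \<Rightarrow>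
   ('n \<Rightarrow> complex^'n) \<Rightarrow> ('n \<Rightarrow> complex^'n) \<Rightarrow> 'n \<Rightarrow> 'n \<Rightarrow> complex" where
  "mu_coeff a lam Nmax S alpha phi psi l k =
     complex_of_real alpha * (psi l)$k
     - (\<Sum>N\<in>{2..Nmax}. complex_of_real alpha ^ N *
          (\<Sum>rs\<in>S N. nf_coeff a lam phi psi l rs * (\<Prod>m<length rs. (psi (rs!m))$k)))"

definition part_factor ::
  "('n::finite \<Rightarrow> 'n list \<Rightarrow> real) \<Rightarrow> ('n \<Rightarrow> complex) \<Rightarrow> nat \<Rightarrow> (nat \<Rightarrow> 'n list set) \<Rightarrow> real \<Rightarrow>
   ('n \<Rightarrow> complex^'n) \<Rightarrow> ('n \<Rightarrow> complex^'n) \<Rightarrow> 'n \<Rightarrow> 'n list \<Rightarrow> complex" where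
  "part_factor a lam Nmax S alpha phi psi k rs =
     (\<Sum>i\<in>UNIV. (phi i)$k * nf_coeff a lam phi psi i rs *
        (\<Prod>m<length rs. mu_coeff a lam Nmax S alpha phi psi (rs!m) k))"

end

theory Submission
  imports Defs
begin

lemma mv_sum:
  fixes M :: "'a::field^'n::finite^'n"
  shows "finite T \<Longrightarrow> M *v (\<Sum>j\<in>T. c j *s v j) = (\<Sum>j\<in>T. c j *s (M *v v j))"
  by (induction T rule: finite_induct) (simp_all add: matrix_vector_right_distrib vector_scalar_commute)

lemma eig_indep:
  fixes M :: "complex^'n::finite^'n"
  assumes inj: "inj lam" and eig: "\<And>i. M *v v i = lam i *s v i" and nz: "\<And>i. v i \<noteq> 0"
  shows "finite T \<Longrightarrow> \<forall>c. (\<Sum>j\<in>T. c j *s v j) = 0 \<longrightarrow> (\<forall>j\<in>T. c j = 0)"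
proof (induction T rule: finite_induct)
  case empty then show ?case by simp
next
  case (insert t T)
  show ?case
  proof (intro allI impI)
    fix c assume h: "(\<Sum>j\<in>insert t T. c j *s v j) = 0"
    have h1: "c t *s v t + (\<Sum>j\<in>T. c j *s v j) = 0" using h insert by simp
    have "M *v (\<Sum>j\<in>insert t T. c j *s v j) = 0" using h by simp
    hence "(\<Sum>j\<in>insert t T. c j *s (M *v v j)) = 0"
      using insert(1) by (simp only: mv_sum finite.insertI)
    hence h2: "c t *s (lam t *s v t) + (\<Sum>j\<in>T. c j *s (lam j *s v j)) = 0"
      using insert(1,2) by (simp add: eig)
    have h3: "lam t *s (c t *s v t) + (\<Sum>j\<in>T. lam t *s (c j *s v j)) = 0"
      using arg_cong[OF h1, of "\<lambda>x. lam t *s x"]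
      by (simp add: vector_ssub_ldistrib scalar_mult_eq_scaleR vec.scale_sum_right)
    have "(\<Sum>j\<in>T. (c j * (lam j - lam t)) *s v j) = 0"
    proof -
      have "(\<Sum>j\<in>T. (c j * (lam j - lam t)) *s v j)
          = (\<Sum>j\<in>T. c j *s (lam j *s v j)) - (\<Sum>j\<in>T. lam t *s (c j *s v j))"
        by (simp add: sum_subtractf[symmetric] algebra_simps vector_sadd_rdistrib vector_sub_rdistrib)
      also have "\<dots> = 0"
      proof -
        have "c t *s (lam t *s v t) = lam t *s (c t *s v t)" by (simp add: mult.commute)
        hence "c t *s (lam t *s v t) + (\<Sum>j\<in>T. c j *s (lam j *s v j))
             = c t *s (lam t *s v t) + (\<Sum>j\<in>T. lam t *s (c j *s v j))" using h2 h3 by (simp add: mult.commute)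
        thus ?thesis by simp
      qed
      finally show ?thesis .
    qed
    hence c0: "\<forall>j\<in>T. c j * (lam j - lam t) = 0" using insert.IH[rule_format, of "\<lambda>j. c j * (lam j - lam t)"] by blast
    have cT: "\<forall>j\<in>T. c j = 0"
    proof
      fix j assume "j \<in> T"
      hence "lam j \<noteq> lam t" using insert(2) inj by (metis injD)
      thus "c j = 0" using c0 \<open>j\<in>T\<close> by auto
    qed
    hence "c t *s v t = 0" using h1 by simp
    hence "c t = 0" using nz[of t] by (metis vector_mul_eq_0)
    thus "\<forall>j\<in>insert t T. c j = 0" using cT by simp
  qed
qed

lemma bilin_vm:
  fixes x y :: "complex^'n::finite" and M :: "complex^'n^'n"
  shows "bilin (x v* M) y = bilin x (M *v y)"
proof -
  have "bilin (x v* M) y = (\<Sum>k\<in>UNIV. (\<Sum>j\<in>UNIV. x$j * M$j$k) * y$k)"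
    unfolding bilin_def vector_matrix_mult_def by simp
  also have "\<dots> = (\<Sum>k\<in>UNIV. \<Sum>j\<in>UNIV. x$j * M$j$k * y$k)"
    by (simp add: sum_distrib_right)
  also have "\<dots> = (\<Sum>j\<in>UNIV. \<Sum>k\<in>UNIV. x$j * M$j$k * y$k)"
    by (rule sum.swap)
  also have "\<dots> = (\<Sum>j\<in>UNIV. x$j * (\<Sum>k\<in>UNIV. M$j$k * y$k))"
    by (simp add: sum_distrib_left mult.assoc)
  also have "\<dots> = bilin x (M *v y)"
    unfolding bilin_def matrix_vector_mult_def by simp
  finally show ?thesis .
qed

lemma bilin_scale:
  fixes x y :: "complex^'n::finite"
  shows "bilin (a *s x) (b *s y) = a * b * bilin x y"
  unfolding bilin_def by (simp add: sum_distrib_left mult_ac)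

lemma c_nz:
  fixes M :: "complex^'n::finite^'n" and phih psih :: "'n \<Rightarrow> complex^'n" and lam :: "'n \<Rightarrow> complex"
  assumes inj: "inj lam" and reig: "\<And>i. M *v phih i = lam i *s phih i"
    and leig: "\<And>i. psih i v* M = lam i *s psih i"
    and rn: "\<And>i. norm (phih i) = 1" and ln: "\<And>i. norm (psih i) = 1"
  shows "bilin (psih i) (phih i) \<noteq> 0"
proof
  assume c0: "bilin (psih i) (phih i) = 0"
  have orth: "bilin (psih i) (phih j) = 0" for j
  proof (cases "j = i")
    case True then show ?thesis using c0 by simp
  next
    case False
    have "lam i * bilin (psih i) (phih j) = bilin (psih i v* M) (phih j)"
      using leig[of i] bilin_scale[of "lam i" "psih i" 1 "phih j"] by simp
    also have "\<dots> = bilin (psih i) (M *v phih j)" by (rule bilin_vm)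
    also have "\<dots> = lam j * bilin (psih i) (phih j)"
      using reig[of j] bilin_scale[of 1 "psih i" "lam j" "phih j"] by simp
    finally have "(lam i - lam j) * bilin (psih i) (phih j) = 0" by (simp add: algebra_simps)
    moreover have "lam i \<noteq> lam j" using False inj by (metis injD)
    ultimately show ?thesis by simp
  qed
  have nz: "phih j \<noteq> 0" for j using rn[of j] by auto
  define P :: "complex^'n^'n" where "P = (\<chi> k j. phih j $ k)"
  have Pv: "P *v c = (\<Sum>j\<in>UNIV. c$j *s phih j)" for c
    unfolding P_def by (simp add: vec_eq_iff matrix_vector_mult_def sum_component mult.commute)
  have ker: "\<forall>c. P *v c = 0 \<longrightarrow> c = 0"
  proof (intro allI impI)
    fix c assume "P *v c = 0"
    hence "(\<Sum>j\<in>UNIV. c$j *s phih j) = 0" by (simp add: Pv)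
    hence "\<forall>j\<in>UNIV. c$j = 0"
      using eig_indep[OF inj reig nz, of UNIV, simplified, rule_format, of "\<lambda>j. c$j"] by blast
    thus "c = 0" by (simp add: vec_eq_iff)
  qed
  then obtain B where "B ** P = mat 1" using matrix_left_invertible_ker by blast
  hence PB: "P ** B = mat 1" using matrix_left_right_inverse by blast
  have "psih i v* P = 0"
    unfolding P_def using orth by (simp add: vec_eq_iff vector_matrix_mult_def bilin_def mult.commute)
  hence "psih i = 0"
    by (metis PB vector_matrix_mul_assoc vector_matrix_mul_rid vector_matrix_mult_0)
  thus False using ln[of i] by simp
qed

lemma nf_scale:
  fixes phi psi phi' psi' :: "'n::finite \<Rightarrow> complex^'n" and s :: "'n \<Rightarrow> complex"
  assumes snz: "\<And>i. s i \<noteq> 0" and ph: "\<And>i. phi' i = s i *s phi i"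
    and ps: "\<And>i. psi' i = inverse (s i) *s psi i"
  shows "nf_coeff a lam phi' psi' i rs
     = inverse (s i) * (\<Prod>m<length rs. s (rs!m)) * nf_coeff a lam phi psi i rs"
proof (cases "length rs = 1")
  case True
  then obtain r where rs: "rs = [r]" by (auto simp: length_Suc_conv)
  show ?thesis using snz[of i] by (simp add: rs nf_coeff_def)
next
  case False
  let ?K = "inverse (s i) * (\<Prod>m<length rs. s (rs!m))"
  have t: "(psi' i)$j * complex_of_real (a j al) * (\<Prod>m<length rs. (phi' (rs!m))$(al!m))
        = ?K * ((psi i)$j * complex_of_real (a j al) * (\<Prod>m<length rs. (phi (rs!m))$(al!m)))"
    for j al
    by (simp add: ph ps prod.distrib mult_ac)
  show ?thesis using False
    unfolding nf_coeff_def by (simp add: t sum_distrib_left[symmetric] del: inverse_eq_divide)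
qed

lemma prod_s_inv:
  fixes s :: "'n \<Rightarrow> complex"
  assumes snz: "\<And>i. s i \<noteq> 0"
  shows "(\<Prod>m<L. s (rs!m)) * (\<Prod>m<L. inverse (s (rs!m))) = 1"
  by (simp add: prod.distrib[symmetric] snz)

lemma mu_scale:
  fixes phi psi phi' psi' :: "'n::finite \<Rightarrow> complex^'n" and s :: "'n \<Rightarrow> complex"
  assumes snz: "\<And>i. s i \<noteq> 0" and ph: "\<And>i. phi' i = s i *s phi i"
    and ps: "\<And>i. psi' i = inverse (s i) *s psi i"
  shows "mu_coeff a lam Nmax S alpha phi' psi' l k = inverse (s l) * mu_coeff a lam Nmax S alpha phi psi l k"
proof -
  have t: "nf_coeff a lam phi' psi' l rs * (\<Prod>m<length rs. (psi' (rs!m))$k)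
      = inverse (s l) * (nf_coeff a lam phi psi l rs * (\<Prod>m<length rs. (psi (rs!m))$k))" for rs
  proof -
    have "nf_coeff a lam phi' psi' l rs * (\<Prod>m<length rs. (psi' (rs!m))$k)
      = inverse (s l) * (\<Prod>m<length rs. s (rs!m)) * nf_coeff a lam phi psi l rs *
          ((\<Prod>m<length rs. inverse (s (rs!m))) * (\<Prod>m<length rs. (psi (rs!m))$k))"
      by (simp add: nf_scale[OF snz ph ps] ps prod.distrib del: inverse_eq_divide)
    also have "\<dots> = inverse (s l) * nf_coeff a lam phi psi l rs * (\<Prod>m<length rs. (psi (rs!m))$k)
          * ((\<Prod>m<length rs. s (rs!m)) * (\<Prod>m<length rs. inverse (s (rs!m))))"
      by (simp only: mult_ac)
    also have "\<dots> = inverse (s l) * (nf_coeff a lam phi psi l rs * (\<Prod>m<length rs. (psi (rs!m))$k))"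
      apply (subst prod_s_inv[OF snz])
      apply (simp del: inverse_eq_divide)
      done
    finally show ?thesis .
  qed
  show ?thesis unfolding mu_coeff_def t
    by (simp add: ps sum_distrib_left right_diff_distrib mult_ac del: inverse_eq_divide)
qed

lemma pf_scale:
  fixes phi psi phi' psi' :: "'n::finite \<Rightarrow> complex^'n" and s :: "'n \<Rightarrow> complex"
  assumes snz: "\<And>i. s i \<noteq> 0" and ph: "\<And>i. phi' i = s i *s phi i"
    and ps: "\<And>i. psi' i = inverse (s i) *s psi i"
  shows "part_factor a lam Nmax S alpha phi' psi' k rs = part_factor a lam Nmax S alpha phi psi k rs"
proof -
  have t: "(phi' i)$k * nf_coeff a lam phi' psi' i rs *
        (\<Prod>m<length rs. mu_coeff a lam Nmax S alpha phi' psi' (rs!m) k)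
     = (phi i)$k * nf_coeff a lam phi psi i rs *
        (\<Prod>m<length rs. mu_coeff a lam Nmax S alpha phi psi (rs!m) k)" for i
  proof -
    have "(phi' i)$k * nf_coeff a lam phi' psi' i rs *
        (\<Prod>m<length rs. mu_coeff a lam Nmax S alpha phi' psi' (rs!m) k)
      = (s i * inverse (s i)) * (phi i)$k * nf_coeff a lam phi psi i rs *
        (\<Prod>m<length rs. mu_coeff a lam Nmax S alpha phi psi (rs!m) k) *
        ((\<Prod>m<length rs. s (rs!m)) * (\<Prod>m<length rs. inverse (s (rs!m))))"
      by (simp add: nf_scale[OF snz ph ps] mu_scale[OF snz ph ps] ph prod.distrib mult_ac
          del: inverse_eq_divide)
    also have "\<dots> = (phi i)$k * nf_coeff a lam phi psi i rs *
        (\<Prod>m<length rs. mu_coeff a lam Nmax S alpha phi psi (rs!m) k)"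
      apply (subst prod_s_inv[OF snz])
      using snz[of i] apply (simp del: inverse_eq_divide)
      done
    finally show ?thesis .
  qed
  show ?thesis unfolding part_factor_def by (simp add: t)
qed

theorem theorem2:
  fixes A :: "real^'n::finite^'n"
    and a :: "'n \<Rightarrow> 'n list \<Rightarrow> real"
    and lam :: "'n \<Rightarrow> complex"
    and phih psih phi psi phi' psi' :: "'n \<Rightarrow> complex^'n"
    and sigma xi sigma' xi' :: "'n \<Rightarrow> complex"
    and Nmax :: nat and S :: "nat \<Rightarrow> 'n list set" and alpha :: real
  assumes distinct_eig: "inj lam"
    and right_eig: "\<And>i. cplx_mat A *v phih i = lam i *s phih i"
    and left_eig: "\<And>i. psih i v* cplx_mat A = lam i *s psih i"
    and right_unit: "\<And>i. norm (phih i) = 1"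
    and left_unit: "\<And>i. norm (psih i) = 1"
    and Nmax_pos: "Nmax \<ge> 1"
    and nonres: "\<And>N i rs. 2 \<le> N \<Longrightarrow> N \<le> Nmax \<Longrightarrow> rs \<in> tuples N \<Longrightarrow>
                   sum_list (map lam rs) - lam i \<noteq> 0"
    and S_sub: "\<And>N. 2 \<le> N \<Longrightarrow> N \<le> Nmax \<Longrightarrow> S N \<subseteq> tuples N"
    and alpha_nz: "alpha \<noteq> 0"
    and choice1: "\<And>i. sigma i \<noteq> 0 \<and> xi i \<noteq> 0 \<and>
                        phi i = sigma i *s phih i \<and> psi i = xi i *s psih i"
    and choice2: "\<And>i. sigma' i \<noteq> 0 \<and> xi' i \<noteq> 0 \<and>
                        phi' i = sigma' i *s phih i \<and> psi' i = xi' i *s psih i"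
    and theta_eq: "\<And>j. bilin (psi j) (phi j) = bilin (psi' j) (phi' j)"
  shows "\<forall>k M rs. 1 \<le> M \<and> M \<le> Nmax \<and> rs \<in> tuples M \<longrightarrow>
           part_factor a lam Nmax S alpha phi psi k rs =
           part_factor a lam Nmax S alpha phi' psi' k rs"
proof -
  have cnz: "bilin (psih i) (phih i) \<noteq> 0" for i
    by (rule c_nz[OF distinct_eig right_eig left_eig right_unit left_unit])
  have snz0: "sigma i \<noteq> 0" "xi i \<noteq> 0" "sigma' i \<noteq> 0" "xi' i \<noteq> 0" for i
    using choice1[of i] choice2[of i] by auto
  have sx: "sigma' i * xi' i = sigma i * xi i" for i
  proof -
    have "xi i * sigma i * bilin (psih i) (phih i) = xi' i * sigma' i * bilin (psih i) (phih i)"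
      using theta_eq[of i] choice1[of i] choice2[of i] by (simp add: bilin_scale)
    thus ?thesis using cnz[of i] by (simp add: mult.commute)
  qed
  define s where "s i = sigma' i / sigma i" for i
  have snz: "s i \<noteq> 0" for i using snz0 by (simp add: s_def)
  have ph: "phi' i = s i *s phi i" for i
    using choice1[of i] choice2[of i] snz0[of i] by (simp add: s_def vector_smult_assoc)
  have ps: "psi' i = inverse (s i) *s psi i" for i
  proof -
    have "xi' i = inverse (s i) * xi i"
      using sx[of i] snz0[of i] by (simp add: s_def field_simps)
    thus ?thesis using choice1[of i] choice2[of i] by (simp add: vector_smult_assoc del: inverse_eq_divide)
  qed
  show ?thesis using pf_scale[OF snz ph ps] by simp
qed

end
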